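(* Let $\{f_j\}_{j=1}^m$, $m\ge2$, be an iterated function system of similarities of $\mathbb{C}$ with common contraction ratio $|\lambda|<1$ and connected attractor $A=\bigcup_j A_j$, $A_j=f_j(A)$, which is invertible with map $q:A\to A$ and has finite nonempty overlap set $\mathcal{O}$. Suppose $q$ is critically non-recurrent and $A$ is of bounded turning with constant $L$. Then there are constants $C\ge1$, $\delta_1>0$ (depending only on the system, not on $L$) such that for every connected $B\subset A$ with $\operatorname{diam}B<\delta_1$, every $n\ge0$, every $x\in q^{-n}(B)$, and $W$ the connected component of $q^{-n}(B)$ containing $x$, $$C|\lambda|^n\operatorname{diam}B\ge\operatorname{diam}W\ge\operatorname{inr}(W,x)\ge(CL)^{-1}|\lambda|^n\operatorname{inr}(B,q^n(x)).$$
   Context: Each $f_j$ is of the form $f_j(z)=|\lambda|e^{i\theta_j}z+d_j$ or $|\lambda|e^{i\theta_j}\overline{z}+d_j$. Invertible: there is continuous $q:A\to A$ with $q|_{A_j}=(f_j|_A)^{-1}$ for each $j$. Overlap set $\mathcal{O}=\bigcup_{i\ne j}(A_i\cap A_j)$. Critically non-recurrent: for every $z\in\mathcal{O}$ the limit set of $\{q^n(z)\}_{n\ge1}$ does not contain $z$. $A$ is of bounded turning with constant $L$ if any $z_1,z_2\in A$ are joined by a curve in $A$ of diameter at most $L|z_1-z_2|$. For $S\subset A$ and $y\in S$, $\operatorname{inr}(S,y)=\inf\{|y-w|:w\in A\setminus S\}$. *)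

theory Defs
  imports "HOL-Analysis.Analysis"
begin

definition similarity_IFS :: "nat \<Rightarrow> real \<Rightarrow> (nat \<Rightarrow> complex \<Rightarrow> complex) \<Rightarrow> bool" where
  "similarity_IFS m r f \<longleftrightarrow>
     (\<forall>j\<in>{1..m}. \<exists>\<theta> d. f j = (\<lambda>z. complex_of_real r * cis \<theta> * z + d)
                        \<or> f j = (\<lambda>z. complex_of_real r * cis \<theta> * cnj z + d))"

definition is_attractor :: "nat \<Rightarrow> (nat \<Rightarrow> complex \<Rightarrow> complex) \<Rightarrow> complex set \<Rightarrow> bool" where
  "is_attractor m f A \<longleftrightarrow> compact A \<and> A \<noteq> {} \<and> A = (\<Union>j\<in>{1..m}. f j ` A)"

definition inverse_map :: "nat \<Rightarrow> (nat \<Rightarrow> complex \<Rightarrow> complex) \<Rightarrow> complex set \<Rightarrow> (complex \<Rightarrow> complex) \<Rightarrow> bool" where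
  "inverse_map m f A q \<longleftrightarrow> continuous_on A q \<and> q ` A \<subseteq> A \<and> (\<forall>j\<in>{1..m}. \<forall>z\<in>A. q (f j z) = z)"

definition overlap_set :: "nat \<Rightarrow> (nat \<Rightarrow> complex \<Rightarrow> complex) \<Rightarrow> complex set \<Rightarrow> complex set" where
  "overlap_set m f A = {z. \<exists>i\<in>{1..m}. \<exists>j\<in>{1..m}. i \<noteq> j \<and> z \<in> f i ` A \<and> z \<in> f j ` A}"

definition orbit_limit_set :: "(complex \<Rightarrow> complex) \<Rightarrow> complex \<Rightarrow> complex set" where
  "orbit_limit_set q z = {w. \<forall>e>0. \<forall>N. \<exists>n\<ge>N. n \<ge> 1 \<and> dist ((q ^^ n) z) w < e}"

definition critically_non_recurrent :: "nat \<Rightarrow> (nat \<Rightarrow> complex \<Rightarrow> complex) \<Rightarrow> complex set \<Rightarrow> (complex \<Rightarrow> complex) \<Rightarrow> bool" where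
  "critically_non_recurrent m f A q \<longleftrightarrow> (\<forall>z\<in>overlap_set m f A. z \<notin> orbit_limit_set q z)"

definition bounded_turning :: "complex set \<Rightarrow> real \<Rightarrow> bool" where
  "bounded_turning A L \<longleftrightarrow>
     (\<forall>z1\<in>A. \<forall>z2\<in>A. \<exists>\<gamma>. path \<gamma> \<and> path_image \<gamma> \<subseteq> A \<and> pathstart \<gamma> = z1 \<and> pathfinish \<gamma> = z2
         \<and> diameter (path_image \<gamma>) \<le> L * dist z1 z2)"

definition inr :: "complex set \<Rightarrow> complex set \<Rightarrow> complex \<Rightarrow> real" where
  "inr A S y = infdist y (A - S)"

definition preimage_iter :: "complex set \<Rightarrow> (complex \<Rightarrow> complex) \<Rightarrow> nat \<Rightarrow> complex set \<Rightarrow> complex set" where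
  "preimage_iter A q n B = {z\<in>A. (q ^^ n) z \<in> B}"

end

theory Submission
  imports Defs
begin

lemma infdist_geI:
  assumes "S \<noteq> {}" "\<And>a. a \<in> S \<Longrightarrow> t \<le> dist x a"
  shows "t \<le> infdist x S"
  using assms by (simp add: infdist_notempty cINF_greatest)

lemma pos_lower_bound_finite:
  assumes "finite (X::real set)" "\<forall>x\<in>X. 0 < x"
  shows "\<exists>e>0. \<forall>x\<in>X. e \<le> x"
proof (cases "X = {}")
  case True then show ?thesis by (rule_tac x=1 in exI) auto
next
  case False
  then show ?thesis using assms by (rule_tac x="Min X" in exI) auto
qed

locale ifs =
  fixes m :: nat and f :: "nat \<Rightarrow> complex \<Rightarrow> complex" and \<rho> :: real
    and A :: "complex set" and q :: "complex \<Rightarrow> complex"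
  assumes rho: "0 < \<rho>" "\<rho> < 1"
    and sim: "similarity_IFS m \<rho> f"
    and att: "is_attractor m f A"
    and conA: "connected A"
    and inv: "inverse_map m f A q"
    and finO: "finite (overlap_set m f A)"
    and cnr: "critically_non_recurrent m f A q"
begin

abbreviation "Ov \<equiv> overlap_set m f A"

lemma compactA: "compact A" and A_eq: "A = (\<Union>j\<in>{1..m}. f j ` A)"
  using att by (auto simp: is_attractor_def)

lemma closedA: "closed A" using compactA compact_imp_closed by auto
lemma boundedA: "bounded A" using compactA compact_imp_bounded by auto

lemma qA: "q ` A \<subseteq> A" and contq: "continuous_on A q" and qf: "j\<in>{1..m} \<Longrightarrow> z\<in>A \<Longrightarrow> q (f j z) = z"
  using inv by (auto simp: inverse_map_def)

lemma f_dist: assumes "j \<in> {1..m}" shows "dist (f j z) (f j w) = \<rho> * dist z w"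
proof -
  obtain \<theta> d where "f j = (\<lambda>z. complex_of_real \<rho> * cis \<theta> * z + d) \<or> f j = (\<lambda>z. complex_of_real \<rho> * cis \<theta> * cnj z + d)"
    using sim assms unfolding similarity_IFS_def by blast
  then show ?thesis
  proof
    assume h: "f j = (\<lambda>z. complex_of_real \<rho> * cis \<theta> * z + d)"
    have "f j z - f j w = complex_of_real \<rho> * cis \<theta> * (z - w)" by (simp add: h algebra_simps)
    then show ?thesis using rho by (simp add: dist_norm norm_mult)
  next
    assume h: "f j = (\<lambda>z. complex_of_real \<rho> * cis \<theta> * cnj z + d)"
    have "f j z - f j w = complex_of_real \<rho> * cis \<theta> * cnj (z - w)" by (simp add: h algebra_simps)
    then have "norm (f j z - f j w) = \<rho> * norm (cnj (z - w))" using rho by (simp only: norm_mult) simp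
    then show ?thesis by (simp only: complex_mod_cnj dist_norm)
  qed
qed

lemma f_cont: assumes "j \<in> {1..m}" shows "continuous_on S (f j)"
proof -
  have "uniformly_continuous_on S (f j)"
    unfolding uniformly_continuous_on_def
  proof (intro allI impI)
    fix e :: real assume "e > 0"
    show "\<exists>d>0. \<forall>x\<in>S. \<forall>x'\<in>S. dist x' x < d \<longrightarrow> dist (f j x') (f j x) < e"
    proof (rule exI[of _ e], intro conjI ballI impI)
      show "0 < e" by fact
      fix x x' assume "x \<in> S" "x' \<in> S" "dist x' x < e"
      have "\<rho> * dist x' x \<le> dist x' x" using rho by (simp add: mult_left_le_one_le)
      then show "dist (f j x') (f j x) < e" using f_dist[OF assms] \<open>dist x' x < e\<close> by simp
    qed
  qed
  then show ?thesis using uniformly_continuous_imp_continuous by blast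
qed

lemma closed_piece: "j \<in> {1..m} \<Longrightarrow> closed (f j ` A)"
  using compact_continuous_image[OF f_cont compactA] compact_imp_closed by blast

lemma piece_subA: "j \<in> {1..m} \<Longrightarrow> f j ` A \<subseteq> A"
  using A_eq by blast

lemma O_subA: "Ov \<subseteq> A"
  unfolding overlap_set_def using piece_subA by blast

lemma z_piece: "z \<in> A \<Longrightarrow> \<exists>j\<in>{1..m}. z \<in> f j ` A"
  using A_eq by blast

lemma q_dist: assumes "j \<in> {1..m}" "z \<in> f j ` A" "w \<in> f j ` A"
  shows "dist z w = \<rho> * dist (q z) (q w)"
  using assms qf f_dist by auto

lemma qn_A: "(q ^^ n) ` A \<subseteq> A"
  by (induction n) (use qA in auto)

lemma qn_cont: "continuous_on A (q ^^ n)"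
proof (induction n)
  case 0 then show ?case by (simp add: continuous_on_id)
next
  case (Suc n)
  have "continuous_on A (q \<circ> (q ^^ n))"
    by (rule continuous_on_compose[OF Suc]) (rule continuous_on_subset[OF contq qn_A])
  then show ?case by (simp add: o_def)
qed


lemma A_sub_qA: "A \<subseteq> q ` A"
proof
  fix z assume z: "z \<in> A"
  then obtain j where j: "j \<in> {1..m}" using z_piece by blast
  then have "f j z \<in> A" using piece_subA z by blast
  moreover have "q (f j z) = z" using qf j z by blast
  ultimately show "z \<in> q ` A" by force
qed

lemma A_sub_qnA: "A \<subseteq> (q ^^ n) ` A"
proof (induction n)
  case 0 then show ?case by simp
next
  case (Suc n)
  have "A \<subseteq> q ` A" by (rule A_sub_qA)
  also have "\<dots> \<subseteq> q ` ((q ^^ n) ` A)" using Suc by blast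
  also have "\<dots> = (q ^^ Suc n) ` A" by (simp add: image_image)
  finally show ?case .
qed

lemma piece:
  assumes "\<Gamma> \<subseteq> A" "connected \<Gamma>" "z \<in> \<Gamma>" "j \<in> {1..m}" "z \<in> f j ` A"
  shows "\<Gamma> \<subseteq> f j ` A \<or> (\<exists>c\<in>Ov. c \<in> \<Gamma> \<and> c \<in> f j ` A)"
proof (rule ccontr)
  assume nc: "\<not> ?thesis"
  then obtain w where w: "w \<in> \<Gamma>" "w \<notin> f j ` A" by blast
  define e2 where "e2 = (\<Union>i\<in>{1..m}-{j}. f i ` A)"
  have c1: "closed (f j ` A)" using closed_piece assms(4) by blast
  have c2: "closed e2" unfolding e2_def using closed_piece by (intro closed_UN) auto
  have cov: "\<Gamma> \<subseteq> f j ` A \<union> e2" using assms(1) A_eq unfolding e2_def by blast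
  have dis: "f j ` A \<inter> e2 \<inter> \<Gamma> = {}"
  proof (rule ccontr)
    assume "f j ` A \<inter> e2 \<inter> \<Gamma> \<noteq> {}"
    then obtain p i where p: "p \<in> f j ` A" "p \<in> \<Gamma>" "i \<in> {1..m}" "i \<noteq> j" "p \<in> f i ` A"
      unfolding e2_def by blast
    then have "p \<in> Ov" unfolding overlap_set_def using assms(4) by blast
    then show False using nc p by blast
  qed
  have "f j ` A \<inter> \<Gamma> \<noteq> {}" using assms by blast
  moreover have "e2 \<inter> \<Gamma> \<noteq> {}" using w cov by blast
  ultimately show False using connected_closed[of \<Gamma>] assms(2) c1 c2 cov dis by blast
qed

lemma separation: "\<exists>s>0. \<forall>c\<in>Ov. \<forall>o'\<in>Ov. c \<noteq> o' \<longrightarrow> s \<le> dist c o'"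
proof -
  let ?X = "(\<lambda>(a,b). dist a b) ` {p \<in> Ov \<times> Ov. fst p \<noteq> snd p}"
  have "finite ?X" using finO by auto
  moreover have "\<forall>x\<in>?X. 0 < x" by auto
  ultimately obtain e where "e > 0" "\<forall>x\<in>?X. e \<le> x" using pos_lower_bound_finite by blast
  then have "\<forall>c\<in>Ov. \<forall>c'\<in>Ov. c \<noteq> c' \<longrightarrow> e \<le> dist c c'"
  proof (intro ballI impI)
    fix c c' assume "c \<in> Ov" "c' \<in> Ov" "c \<noteq> c'"
    then have "dist c c' \<in> ?X" by (rule_tac image_eqI[of _ _ "(c,c')"]) auto
    then show "e \<le> dist c c'" using \<open>\<forall>x\<in>?X. e \<le> x\<close> by blast
  qed
  then show ?thesis using \<open>e > 0\<close> by blast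
qed

lemma periodic: "(q ^^ k) c = c \<Longrightarrow> (q ^^ (k * j)) c = c"
proof (induction j)
  case 0 then show ?case by simp
next
  case (Suc j)
  have "(q ^^ (k * Suc j)) c = (q ^^ k) ((q ^^ (k * j)) c)" by (simp add: funpow_add)
  then show ?case using Suc by simp
qed

lemma eta_one: assumes "c \<in> Ov" shows "\<exists>e>0. \<forall>k\<ge>1. e \<le> dist ((q ^^ k) c) c"
proof -
  have "c \<notin> orbit_limit_set q c" using cnr assms unfolding critically_non_recurrent_def by blast
  then obtain e N where e: "e > 0" "\<forall>n\<ge>N. n \<ge> 1 \<longrightarrow> \<not> dist ((q ^^ n) c) c < e"
    unfolding orbit_limit_set_def by auto
  have nz: "0 < dist ((q ^^ k) c) c" if "k \<ge> 1" for k
  proof (rule ccontr)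
    assume "\<not> ?thesis"
    then have "(q ^^ k) c = c" by simp
    then have "(q ^^ (k * (N+1))) c = c" by (rule periodic)
    moreover have "k * (N+1) \<ge> N" "k * (N+1) \<ge> 1"
      using that by (metis One_nat_def add.commute le_add1 mult_le_mono1 mult_1 order_trans) (use that in simp)
    ultimately show False using e by (metis dist_self)
  qed
  let ?X = "insert e ((\<lambda>k. dist ((q ^^ k) c) c) ` {1..<N})"
  have "finite ?X" "\<forall>x\<in>?X. 0 < x" using nz e by auto
  then obtain \<eta> where \<eta>: "\<eta> > 0" "\<forall>x\<in>?X. \<eta> \<le> x" using pos_lower_bound_finite by blast
  have "\<eta> \<le> dist ((q ^^ k) c) c" if "k \<ge> 1" for k
  proof (cases "k < N")
    case True then show ?thesis using \<eta> that by auto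
  next
    case False then have "e \<le> dist ((q ^^ k) c) c" using e that by (meson not_less)
    then show ?thesis using \<eta> by auto
  qed
  then show ?thesis using \<eta> by blast
qed

lemma eta: "\<exists>\<eta>>0. \<forall>c\<in>Ov. \<forall>k\<ge>1. \<eta> \<le> dist ((q ^^ k) c) c"
proof -
  have "\<forall>c\<in>Ov. \<exists>e. e > 0 \<and> (\<forall>k\<ge>1. e \<le> dist ((q ^^ k) c) c)"
  proof
    fix c assume "c \<in> Ov"
    from eta_one[OF this] show "\<exists>e. e > 0 \<and> (\<forall>k\<ge>1. e \<le> dist ((q ^^ k) c) c)" by blast
  qed
  then obtain g where g: "\<forall>c\<in>Ov. g c > 0 \<and> (\<forall>k\<ge>1. g c \<le> dist ((q ^^ k) c) c)"
    using finite_set_choice[OF finO, of "\<lambda>c e. e > 0 \<and> (\<forall>k\<ge>1. e \<le> dist ((q ^^ k) c) c)"] by presburger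
  have "finite (g ` Ov)" using finO by simp
  moreover have "\<forall>x\<in>g ` Ov. 0 < x" using g by blast
  ultimately obtain e where e: "e > 0" "\<forall>x\<in>g ` Ov. e \<le> x"
    using pos_lower_bound_finite[of "g ` Ov"] by blast
  have "\<forall>c\<in>Ov. \<forall>k\<ge>1. e \<le> dist ((q ^^ k) c) c"
  proof (intro ballI allI impI)
    fix c k assume "c \<in> Ov" "(1::nat) \<le> k"
    then have "e \<le> g c" "g c \<le> dist ((q ^^ k) c) c" using e g by auto
    then show "e \<le> dist ((q ^^ k) c) c" by linarith
  qed
  then show ?thesis using e(1) by blast
qed

lemma contract_step:
  assumes sep: "\<forall>c\<in>Ov. \<forall>c'\<in>Ov. c \<noteq> c' \<longrightarrow> s \<le> dist c c'"
    and G: "\<Gamma> \<subseteq> A" "connected \<Gamma>" and bq: "bounded (q ` \<Gamma>)" and dq: "diameter (q ` \<Gamma>) \<le> d"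
    and d0: "0 \<le> d" and ds: "2 * \<rho> * d < s"
  shows "(Ov \<inter> \<Gamma> = {} \<and> diameter \<Gamma> \<le> \<rho> * d) \<or> (\<exists>c. Ov \<inter> \<Gamma> = {c} \<and> diameter \<Gamma> \<le> 2 * \<rho> * d)"
proof -
  have pq: "dist (q z) (q w) \<le> d" if "z \<in> \<Gamma>" "w \<in> \<Gamma>" for z w
    using diameter_bounded_bound[OF bq, of "q z" "q w"] that dq by auto
  have rd0: "0 \<le> \<rho> * d" using rho d0 by simp
  show ?thesis
  proof (cases "Ov \<inter> \<Gamma> = {}")
    case True
    have "diameter \<Gamma> \<le> \<rho> * d"
    proof (cases "\<Gamma> = {}")
      case True then show ?thesis using rd0 by simp
    next
      case False
      then obtain z where z: "z \<in> \<Gamma>" by blast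
      then obtain j where j: "j \<in> {1..m}" "z \<in> f j ` A" using z_piece G by blast
      have sub: "\<Gamma> \<subseteq> f j ` A" using piece[OF G z j] True by blast
      show ?thesis
      proof (rule diameter_le)
        show "\<Gamma> \<noteq> {} \<or> 0 \<le> \<rho> * d" using rd0 by simp
        fix x y assume "x \<in> \<Gamma>" "y \<in> \<Gamma>"
        then have "dist x y = \<rho> * dist (q x) (q y)" using q_dist[OF j(1)] sub by blast
        also have "\<dots> \<le> \<rho> * d" using pq[OF \<open>x \<in> \<Gamma>\<close> \<open>y \<in> \<Gamma>\<close>] rho by simp
        finally show "norm (x - y) \<le> \<rho> * d" by (simp add: dist_norm)
      qed
    qed
    then show ?thesis using True by blast
  next
    case False
    then obtain c0 where c0: "c0 \<in> Ov" "c0 \<in> \<Gamma>" by blast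
    have near: "\<exists>c\<in>Ov \<inter> \<Gamma>. dist z c \<le> \<rho> * d" if z: "z \<in> \<Gamma>" for z
    proof -
      obtain j where j: "j \<in> {1..m}" "z \<in> f j ` A" using z_piece G z by blast
      from piece[OF G z j] obtain c where c: "c \<in> Ov" "c \<in> \<Gamma>" "c \<in> f j ` A"
        using c0 by blast
      have "dist z c = \<rho> * dist (q z) (q c)" using q_dist[OF j c(3)] .
      also have "\<dots> \<le> \<rho> * d" using pq[OF z c(2)] rho by simp
      finally show ?thesis using c by blast
    qed
    have uniq: "Ov \<inter> \<Gamma> = {c0}"
    proof (rule ccontr)
      assume "Ov \<inter> \<Gamma> \<noteq> {c0}"
      then obtain c1 where c1: "c1 \<in> Ov" "c1 \<in> \<Gamma>" "c1 \<noteq> c0" using c0 by blast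
      define e1 where "e1 = cball c0 (\<rho> * d)"
      define e2 where "e2 = (\<Union>c\<in>(Ov \<inter> \<Gamma>) - {c0}. cball c (\<rho> * d))"
      have cl1: "closed e1" unfolding e1_def by simp
      have cl2: "closed e2" unfolding e2_def using finO by (intro closed_UN) auto
      have cov: "\<Gamma> \<subseteq> e1 \<union> e2"
      proof
        fix z assume "z \<in> \<Gamma>"
        from near[OF this] obtain c where "c \<in> Ov \<inter> \<Gamma>" "dist z c \<le> \<rho> * d" by blast
        then show "z \<in> e1 \<union> e2" unfolding e1_def e2_def by (cases "c = c0") (auto simp: dist_commute)
      qed
      have dis: "e1 \<inter> e2 \<inter> \<Gamma> = {}"
      proof (rule ccontr)
        assume "e1 \<inter> e2 \<inter> \<Gamma> \<noteq> {}"
        then obtain p where "p \<in> e1" "p \<in> e2" by blast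
        then obtain c where "c \<in> (Ov \<inter> \<Gamma>) - {c0}" "p \<in> cball c (\<rho> * d)" "p \<in> cball c0 (\<rho> * d)"
          unfolding e1_def e2_def by blast
        then have p: "dist c0 p \<le> \<rho> * d" "c \<in> Ov" "c \<noteq> c0" "dist c p \<le> \<rho> * d" by auto
        have "dist c0 c \<le> dist c0 p + dist c p" by (rule dist_triangle2)
        then have "dist c0 c < s" using p ds by linarith
        moreover have "s \<le> dist c0 c" using sep c0 p by metis
        ultimately show False by linarith
      qed
      have "c0 \<in> e1 \<inter> \<Gamma>" using c0 rd0 unfolding e1_def by simp
      then have "e1 \<inter> \<Gamma> \<noteq> {}" by blast
      moreover have "c1 \<in> cball c1 (\<rho> * d)" using rd0 by simp
      then have "c1 \<in> e2 \<inter> \<Gamma>" using c1 unfolding e2_def by blast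
      then have "e2 \<inter> \<Gamma> \<noteq> {}" by blast
      ultimately show False using connected_closed[of \<Gamma>] G(2) cl1 cl2 cov dis by blast
    qed
    have "diameter \<Gamma> \<le> 2 * \<rho> * d"
    proof (rule diameter_le)
      show "\<Gamma> \<noteq> {} \<or> 0 \<le> 2 * \<rho> * d" using c0 by blast
      fix x y assume "x \<in> \<Gamma>" "y \<in> \<Gamma>"
      then have "dist x c0 \<le> \<rho> * d" "dist y c0 \<le> \<rho> * d" using near uniq by fastforce+
      then have "dist x y \<le> 2 * \<rho> * d" using dist_triangle2[of x y c0] by linarith
      then show "norm (x - y) \<le> 2 * \<rho> * d" by (simp add: dist_norm)
    qed
    then show ?thesis using uniq by blast
  qed
qed

lemma expand_step:
  assumes sep: "\<forall>c\<in>Ov. \<forall>c'\<in>Ov. c \<noteq> c' \<longrightarrow> s \<le> dist c c'"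
    and G: "\<Gamma> \<subseteq> A" "connected \<Gamma>" "bounded \<Gamma>" and ds: "diameter \<Gamma> < s"
  shows "(Ov \<inter> \<Gamma> = {} \<and> diameter (q ` \<Gamma>) \<le> diameter \<Gamma> / \<rho>)
       \<or> (\<exists>c. Ov \<inter> \<Gamma> = {c} \<and> diameter (q ` \<Gamma>) \<le> 2 * diameter \<Gamma> / \<rho>)"
proof -
  let ?D = "diameter \<Gamma>"
  have D0: "0 \<le> ?D" using diameter_ge_0[OF G(3)] .
  have pd: "dist z w \<le> ?D" if "z \<in> \<Gamma>" "w \<in> \<Gamma>" for z w
    using diameter_bounded_bound[OF G(3) that] .
  have qd: "dist (q z) (q w) = dist z w / \<rho>" if "j \<in> {1..m}" "z \<in> f j ` A" "w \<in> f j ` A" for j z w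
    using q_dist[OF that] rho by simp
  have Dr: "0 \<le> ?D / \<rho>" using D0 rho by simp
  show ?thesis
  proof (cases "Ov \<inter> \<Gamma> = {}")
    case True
    have "diameter (q ` \<Gamma>) \<le> ?D / \<rho>"
    proof (cases "\<Gamma> = {}")
      case True then show ?thesis using Dr by simp
    next
      case False
      then obtain z where z: "z \<in> \<Gamma>" by blast
      then obtain j where j: "j \<in> {1..m}" "z \<in> f j ` A" using z_piece G by blast
      have sub: "\<Gamma> \<subseteq> f j ` A" using piece[OF G(1,2) z j] True by blast
      show ?thesis
      proof (rule diameter_le)
        show "q ` \<Gamma> \<noteq> {} \<or> 0 \<le> ?D / \<rho>" using Dr by simp
        fix x y assume "x \<in> q ` \<Gamma>" "y \<in> q ` \<Gamma>"
        then obtain x' y' where xy: "x' \<in> \<Gamma>" "y' \<in> \<Gamma>" "x = q x'" "y = q y'" by blast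
        then have "dist x y = dist x' y' / \<rho>" using qd[OF j(1)] sub by blast
        also have "\<dots> \<le> ?D / \<rho>" using pd[OF xy(1,2)] rho by (simp add: divide_right_mono)
        finally show "norm (x - y) \<le> ?D / \<rho>" by (simp add: dist_norm)
      qed
    qed
    then show ?thesis using True by blast
  next
    case False
    then obtain c0 where c0: "c0 \<in> Ov" "c0 \<in> \<Gamma>" by blast
    have uniq: "Ov \<inter> \<Gamma> = {c0}"
    proof (rule ccontr)
      assume "Ov \<inter> \<Gamma> \<noteq> {c0}"
      then obtain c1 where c1: "c1 \<in> Ov" "c1 \<in> \<Gamma>" "c1 \<noteq> c0" using c0 by blast
      have "s \<le> dist c1 c0" using sep c0 c1 by metis
      moreover have "dist c1 c0 \<le> ?D" using pd c0 c1 by blast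
      ultimately show False using ds by linarith
    qed
    have near: "dist (q z) (q c0) \<le> ?D / \<rho>" if z: "z \<in> \<Gamma>" for z
    proof -
      obtain j where j: "j \<in> {1..m}" "z \<in> f j ` A" using z_piece G z by blast
      from piece[OF G(1,2) z j] obtain c where c: "c \<in> Ov" "c \<in> \<Gamma>" "c \<in> f j ` A"
        using c0 by blast
      then have "c = c0" using uniq by blast
      then have "dist (q z) (q c0) = dist z c0 / \<rho>" using qd[OF j] c by blast
      also have "\<dots> \<le> ?D / \<rho>" using pd[OF z c0(2)] rho by (simp add: divide_right_mono)
      finally show ?thesis .
    qed
    have "diameter (q ` \<Gamma>) \<le> 2 * ?D / \<rho>"
    proof (rule diameter_le)
      show "q ` \<Gamma> \<noteq> {} \<or> 0 \<le> 2 * ?D / \<rho>" using c0 by blast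
      fix x y assume "x \<in> q ` \<Gamma>" "y \<in> q ` \<Gamma>"
      then obtain x' y' where xy: "x' \<in> \<Gamma>" "y' \<in> \<Gamma>" "x = q x'" "y = q y'" by blast
      have "dist x y \<le> dist x (q c0) + dist y (q c0)" by (rule dist_triangle2)
      also have "\<dots> \<le> ?D / \<rho> + ?D / \<rho>" using near xy by (metis add_mono)
      finally show "norm (x - y) \<le> 2 * ?D / \<rho>" by (simp add: dist_norm)
    qed
    then show ?thesis using uniq by blast
  qed
qed
lemma inr_le_diam:
  assumes S: "S \<subseteq> A" "y \<in> S"
  shows "infdist y (A - S) \<le> diameter S"
proof -
  have bS: "bounded S" using S boundedA bounded_subset by blast
  have D0: "0 \<le> diameter S" using diameter_ge_0[OF bS] .
  show ?thesis
  proof (cases "A - S = {}")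
    case True then show ?thesis using D0 by (simp add: infdist_def)
  next
    case False
    then obtain a where a: "a \<in> A" "a \<notin> S" by blast
    show ?thesis
    proof (rule ccontr)
      assume "\<not> ?thesis"
      then have lt: "diameter S < infdist y (A - S)" by simp
      define t where "t = (diameter S + infdist y (A - S)) / 2"
      have t: "diameter S < t" "t < infdist y (A - S)" "0 < t" using lt D0 unfolding t_def by auto
      have ya: "infdist y (A - S) \<le> dist y a" using a by (intro infdist_le) auto
      have "A \<inter> ball y t \<noteq> {}" using S t by auto
      moreover have "A - ball y t \<noteq> {}" using a ya t by auto
      ultimately have "A \<inter> frontier (ball y t) \<noteq> {}" using connected_Int_frontier[OF conA] by blast
      then obtain w where w0: "w \<in> A" "w \<in> frontier (ball y t)" by blast
      then have w: "w \<in> A" "dist y w = t" using t(3) by auto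
      have "w \<in> S"
      proof (rule ccontr)
        assume "w \<notin> S"
        then have "infdist y (A - S) \<le> dist y w" using w by (intro infdist_le) auto
        then show False using w t by linarith
      qed
      then have "dist y w \<le> diameter S" using diameter_bounded_bound[OF bS S(2)] by blast
      then show False using w t by linarith
    qed
  qed
qed

lemma pow2_mono: "a \<le> b \<Longrightarrow> 0 \<le> X \<Longrightarrow> (2::real) ^ a * X \<le> 2 ^ b * X"
  by (intro mult_right_mono power_increasing) auto

lemma upper:
  assumes sep: "\<forall>c\<in>Ov. \<forall>c'\<in>Ov. c \<noteq> c' \<longrightarrow> s \<le> dist c c'"
    and etaP: "\<forall>c\<in>Ov. \<forall>k\<ge>1. \<eta> \<le> dist ((q ^^ k) c) c"
    and B: "B \<subseteq> A" and x: "x \<in> preimage_iter A q n B"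
    and sm1: "2 ^ card Ov * diameter B < \<eta>" and sm2: "2 ^ card Ov * diameter B < s / 2"
  shows "diameter (connected_component_set (preimage_iter A q n B) x) \<le> 2 ^ card Ov * \<rho> ^ n * diameter B"
proof -
  define P where "P k = preimage_iter A q k B" for k
  define V where "V k = connected_component_set (P k) ((q ^^ (n - k)) x)" for k
  define \<Gamma> where "\<Gamma> k = closure (V k)" for k
  define G where "G k = {c\<in>Ov. \<exists>j\<in>{1..k}. c \<in> \<Gamma> j}" for k
  define K where "K = card Ov"
  have bB: "bounded B" using B boundedA bounded_subset by blast
  have dB0: "0 \<le> diameter B" using diameter_ge_0[OF bB] .
  have PA: "P k \<subseteq> A" for k unfolding P_def preimage_iter_def by blast
  have VA: "V k \<subseteq> A" for k unfolding V_def using PA connected_component_subset by blast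
  have bV: "bounded (V k)" for k using VA boundedA bounded_subset by blast
  have \<Gamma>A: "\<Gamma> k \<subseteq> A" for k unfolding \<Gamma>_def using VA closedA closure_minimal by blast
  have c\<Gamma>: "connected (\<Gamma> k)" for k unfolding \<Gamma>_def V_def by (simp add: connected_imp_connected_closure)
  have b\<Gamma>: "bounded (\<Gamma> k)" for k unfolding \<Gamma>_def using bV bounded_closure by blast
  have d\<Gamma>: "diameter (\<Gamma> k) = diameter (V k)" for k unfolding \<Gamma>_def using diameter_closure[OF bV] .
  have cl\<Gamma>: "closed (\<Gamma> k)" for k unfolding \<Gamma>_def by simp
  have qV: "q ` V (Suc k) \<subseteq> V k" if "Suc k \<le> n" for k
  proof -
    have xin: "(q ^^ (n - Suc k)) x \<in> A" using x qn_A unfolding preimage_iter_def by blast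
    have e: "n - k = Suc (n - Suc k)" using that by simp
    have eqq: "q ((q ^^ (n - Suc k)) x) = (q ^^ (n - k)) x" unfolding e by simp
    have inV: "(q ^^ (n - Suc k)) x \<in> V (Suc k)"
    proof -
      have "(q ^^ Suc k) ((q ^^ (n - Suc k)) x) = (q ^^ (Suc k + (n - Suc k))) x"
        by (simp only: funpow_add o_apply)
      also have "Suc k + (n - Suc k) = n" using that by simp
      finally have "(q ^^ Suc k) ((q ^^ (n - Suc k)) x) = (q ^^ n) x" .
      then have "(q ^^ (n - Suc k)) x \<in> P (Suc k)" using x xin unfolding P_def preimage_iter_def by auto
      then show ?thesis unfolding V_def by simp
    qed
    have xi: "(q ^^ (n - k)) x \<in> q ` V (Suc k)" using imageI[OF inV, of q] unfolding eqq .
    have cq: "connected (q ` V (Suc k))"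
      by (rule connected_continuous_image[OF continuous_on_subset[OF contq VA]]) (simp only: V_def connected_connected_component)
    have sq: "q ` V (Suc k) \<subseteq> P k"
    proof
      fix y assume "y \<in> q ` V (Suc k)"
      then obtain z where z: "z \<in> V (Suc k)" "y = q z" by blast
      then have "z \<in> P (Suc k)" unfolding V_def using connected_component_subset by blast
      then have "z \<in> A" "(q ^^ Suc k) z \<in> B" unfolding P_def preimage_iter_def by auto
      moreover have "(q ^^ Suc k) z = (q ^^ k) (q z)" by (simp only: funpow_Suc_right o_apply)
      ultimately show "y \<in> P k" using z qA unfolding P_def preimage_iter_def by auto
    qed
    show ?thesis unfolding V_def[of k] by (rule connected_component_maximal[OF xi cq sq])
  qed
  have q\<Gamma>: "q ` \<Gamma> (Suc k) \<subseteq> \<Gamma> k" if "Suc k \<le> n" for k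
  proof -
    have "continuous_on (closure (V (Suc k))) q"
      using continuous_on_subset[OF contq \<Gamma>A[of "Suc k", unfolded \<Gamma>_def]] .
    moreover have "q ` V (Suc k) \<subseteq> \<Gamma> k" using qV[OF that] closure_subset unfolding \<Gamma>_def by blast
    ultimately show ?thesis unfolding \<Gamma>_def[of "Suc k"] by (rule image_closure_subset[OF _ cl\<Gamma>])
  qed
  have qi\<Gamma>: "(q ^^ i) ` \<Gamma> (j + i) \<subseteq> \<Gamma> j" if "j + i \<le> n" for i j
    using that
  proof (induction i)
    case 0 then show ?case by simp
  next
    case (Suc i)
    have "(q ^^ Suc i) ` \<Gamma> (j + Suc i) = (q ^^ i) ` (q ` \<Gamma> (Suc (j + i)))"
      by (simp only: funpow_Suc_right image_comp add_Suc_right)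
    also have "\<dots> \<subseteq> (q ^^ i) ` \<Gamma> (j + i)" using q\<Gamma>[of "j + i"] Suc.prems by (intro image_mono) auto
    also have "\<dots> \<subseteq> \<Gamma> j" using Suc by simp
    finally show ?case .
  qed
  have finG: "finite (G k)" for k unfolding G_def using finO by simp
  have cardG: "card (G k) \<le> K" for k unfolding K_def G_def using finO by (intro card_mono) auto
  have Gmono: "G k \<subseteq> G (Suc k)" for k unfolding G_def by auto
  have main: "\<forall>j\<le>k. diameter (V j) \<le> 2 ^ card (G j) * \<rho> ^ j * diameter B" if "k \<le> n" for k
    using that
  proof (induction k)
    case 0
    have "V 0 \<subseteq> B" unfolding V_def P_def preimage_iter_def using connected_component_subset by fastforce
    then have "diameter (V 0) \<le> diameter B" using diameter_subset bB by blast
    moreover have "G 0 = {}" unfolding G_def by auto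
    ultimately show ?case by simp
  next
    case (Suc k)
    then have IH: "\<forall>j\<le>k. diameter (V j) \<le> 2 ^ card (G j) * \<rho> ^ j * diameter B" by simp
    have small: "diameter (V j) < \<eta>" "diameter (V j) < s / 2" if "j \<le> k" for j
    proof -
      have "diameter (V j) \<le> 2 ^ card (G j) * \<rho> ^ j * diameter B" using IH that by blast
      also have "\<dots> \<le> 2 ^ card (G j) * diameter B"
        using rho dB0 by (intro mult_right_mono mult_left_le power_le_one) auto
      also have "\<dots> \<le> 2 ^ card Ov * diameter B" using pow2_mono[OF cardG dB0] K_def by simp
      finally show "diameter (V j) < \<eta>" "diameter (V j) < s / 2" using sm1 sm2 by linarith+
    qed
    let ?d = "diameter (V k)"
    have d0: "0 \<le> ?d" using diameter_ge_0[OF bV] .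
    have bq: "bounded (q ` \<Gamma> (Suc k))" using q\<Gamma>[OF Suc.prems] b\<Gamma> bounded_subset by blast
    have dq: "diameter (q ` \<Gamma> (Suc k)) \<le> ?d"
      using diameter_subset[OF q\<Gamma>[OF Suc.prems] b\<Gamma>] d\<Gamma> by simp
    have "\<rho> * ?d \<le> ?d" using rho d0 by (intro mult_left_le_one_le) auto
    moreover have "2 * \<rho> * ?d = 2 * (\<rho> * ?d)" by simp
    ultimately have ds: "2 * \<rho> * ?d < s" using small(2)[of k] by linarith
    have hk: "?d \<le> 2 ^ card (G k) * \<rho> ^ k * diameter B" using IH by blast
    have "diameter (V (Suc k)) \<le> 2 ^ card (G (Suc k)) * \<rho> ^ Suc k * diameter B"
      using contract_step[OF sep \<Gamma>A c\<Gamma> bq dq d0 ds]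
    proof (elim disjE exE conjE)
      assume "diameter (\<Gamma> (Suc k)) \<le> \<rho> * ?d"
      moreover have "\<rho> * ?d \<le> \<rho> * (2 ^ card (G k) * \<rho> ^ k * diameter B)"
        using hk rho by (intro mult_left_mono) auto
      ultimately have "diameter (V (Suc k)) \<le> \<rho> * (2 ^ card (G k) * \<rho> ^ k * diameter B)"
        using d\<Gamma> by simp
      also have "\<dots> = 2 ^ card (G k) * (\<rho> ^ Suc k * diameter B)" by (simp add: algebra_simps)
      also have "\<dots> \<le> 2 ^ card (G (Suc k)) * (\<rho> ^ Suc k * diameter B)"
        using rho dB0 by (intro pow2_mono card_mono finG Gmono) auto
      finally show ?thesis by (simp add: algebra_simps)
    next
      fix c assume c: "Ov \<inter> \<Gamma> (Suc k) = {c}" and dd: "diameter (\<Gamma> (Suc k)) \<le> 2 * \<rho> * ?d"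
      have cnot: "c \<notin> G k"
      proof
        assume "c \<in> G k"
        then obtain j where j: "j \<in> {1..k}" "c \<in> \<Gamma> j" "c \<in> Ov" unfolding G_def by blast
        have jj: "j + (Suc k - j) = Suc k" using j by simp
        have "(q ^^ (Suc k - j)) ` \<Gamma> (j + (Suc k - j)) \<subseteq> \<Gamma> j"
          by (rule qi\<Gamma>) (use jj Suc.prems in simp)
        then have "(q ^^ (Suc k - j)) ` \<Gamma> (Suc k) \<subseteq> \<Gamma> j" unfolding jj .
        then have "(q ^^ (Suc k - j)) c \<in> \<Gamma> j" using c by blast
        then have "dist ((q ^^ (Suc k - j)) c) c \<le> diameter (\<Gamma> j)"
          using diameter_bounded_bound[OF b\<Gamma>] j by blast
        moreover have "\<eta> \<le> dist ((q ^^ (Suc k - j)) c) c" using etaP j by auto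
        moreover have "diameter (\<Gamma> j) < \<eta>" using small(1)[of j] d\<Gamma> j by simp
        ultimately show False by linarith
      qed
      have "insert c (G k) \<subseteq> G (Suc k)" using c Gmono unfolding G_def by auto
      then have cc: "card (G k) + 1 \<le> card (G (Suc k))"
        using card_mono[OF finG] cnot finG by (metis Suc_eq_plus1 card_insert_disjoint)
      have "2 * \<rho> * ?d \<le> 2 * \<rho> * (2 ^ card (G k) * \<rho> ^ k * diameter B)"
        using hk rho by (intro mult_left_mono) auto
      then have "diameter (V (Suc k)) \<le> 2 * \<rho> * (2 ^ card (G k) * \<rho> ^ k * diameter B)"
        using d\<Gamma> dd by simp
      also have "\<dots> = 2 ^ (card (G k) + 1) * (\<rho> ^ Suc k * diameter B)" by (simp add: algebra_simps)
      also have "\<dots> \<le> 2 ^ card (G (Suc k)) * (\<rho> ^ Suc k * diameter B)"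
        using rho dB0 cc by (intro pow2_mono) auto
      finally show ?thesis by (simp add: algebra_simps)
    qed
    then show ?case using IH le_Suc_eq by auto
  qed
  have "diameter (V n) \<le> 2 ^ card (G n) * \<rho> ^ n * diameter B" using main[of n] by simp
  also have "\<dots> \<le> 2 ^ card Ov * \<rho> ^ n * diameter B"
    using pow2_mono[OF cardG, of "\<rho> ^ n * diameter B" n] rho dB0 K_def by (simp add: algebra_simps)
  finally show ?thesis unfolding V_def P_def by simp
qed
lemma lower:
  assumes sep: "\<forall>c\<in>Ov. \<forall>c'\<in>Ov. c \<noteq> c' \<longrightarrow> s \<le> dist c c'"
    and etaP: "\<forall>c\<in>Ov. \<forall>k\<ge>1. \<eta> \<le> dist ((q ^^ k) c) c"
    and G0: "\<Gamma>0 \<subseteq> A" "connected \<Gamma>0" "compact \<Gamma>0"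
    and sm1: "2 ^ card Ov * (1/\<rho>) ^ n * diameter \<Gamma>0 < \<eta>"
    and sm2: "2 ^ card Ov * (1/\<rho>) ^ n * diameter \<Gamma>0 < s"
  shows "diameter ((q ^^ n) ` \<Gamma>0) \<le> 2 ^ card Ov * (1/\<rho>) ^ n * diameter \<Gamma>0"
proof -
  define \<Gamma> where "\<Gamma> k = (q ^^ k) ` \<Gamma>0" for k
  define H where "H k = {c\<in>Ov. \<exists>j<k. c \<in> \<Gamma> j}" for k
  define a where "a = 1 / \<rho>"
  define D where "D = diameter \<Gamma>0"
  have a1: "1 \<le> a" using rho unfolding a_def by simp
  have D0: "0 \<le> D" unfolding D_def using diameter_ge_0[OF compact_imp_bounded[OF G0(3)]] .
  have \<Gamma>A: "\<Gamma> k \<subseteq> A" for k unfolding \<Gamma>_def using qn_A G0(1) by blast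
  have cpt: "compact (\<Gamma> k)" for k
    unfolding \<Gamma>_def by (rule compact_continuous_image[OF continuous_on_subset[OF qn_cont G0(1)] G0(3)])
  have b\<Gamma>: "bounded (\<Gamma> k)" for k using cpt compact_imp_bounded by blast
  have c\<Gamma>: "connected (\<Gamma> k)" for k
    unfolding \<Gamma>_def by (rule connected_continuous_image[OF continuous_on_subset[OF qn_cont G0(1)] G0(2)])
  have \<Gamma>S: "\<Gamma> (Suc k) = q ` \<Gamma> k" for k unfolding \<Gamma>_def by (simp only: funpow.simps(2) image_comp)
  have sh: "(q ^^ i) ` \<Gamma> j = \<Gamma> (i + j)" for i j unfolding \<Gamma>_def by (simp only: funpow_add image_comp)
  have finH: "finite (H k)" for k unfolding H_def using finO by simp
  have cardH: "card (H k) \<le> card Ov" for k unfolding H_def using finO by (intro card_mono) auto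
  have Hmono: "H k \<subseteq> H (Suc k)" for k unfolding H_def using less_SucI by blast
  have main: "\<forall>j\<le>k. diameter (\<Gamma> j) \<le> 2 ^ card (H j) * a ^ j * D" if "k \<le> n" for k
    using that
  proof (induction k)
    case 0
    have "\<Gamma> 0 = \<Gamma>0" unfolding \<Gamma>_def by simp
    moreover have "H 0 = {}" unfolding H_def by auto
    ultimately show ?case unfolding D_def by simp
  next
    case (Suc k)
    then have IH: "\<forall>j\<le>k. diameter (\<Gamma> j) \<le> 2 ^ card (H j) * a ^ j * D" by simp
    have small: "diameter (\<Gamma> j) < \<eta>" "diameter (\<Gamma> j) < s" if "j \<le> k" for j
    proof -
      have "diameter (\<Gamma> j) \<le> 2 ^ card (H j) * a ^ j * D" using IH that by blast
      also have "\<dots> = 2 ^ card (H j) * (a ^ j * D)" by simp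
      also have "\<dots> \<le> 2 ^ card Ov * (a ^ j * D)"
        using pow2_mono[OF cardH] D0 a1 by simp
      also have "\<dots> \<le> 2 ^ card Ov * (a ^ n * D)"
        using that Suc.prems a1 D0 by (intro mult_left_mono mult_right_mono power_increasing) auto
      finally have "diameter (\<Gamma> j) \<le> 2 ^ card Ov * (1/\<rho>) ^ n * diameter \<Gamma>0"
        unfolding a_def D_def by (simp add: algebra_simps)
      then show "diameter (\<Gamma> j) < \<eta>" "diameter (\<Gamma> j) < s" using sm1 sm2 by linarith+
    qed
    let ?d = "diameter (\<Gamma> k)"
    have hk: "?d \<le> 2 ^ card (H k) * a ^ k * D" using IH by blast
    have "diameter (\<Gamma> (Suc k)) \<le> 2 ^ card (H (Suc k)) * a ^ Suc k * D"
      using expand_step[OF sep \<Gamma>A c\<Gamma> b\<Gamma> small(2)[OF order_refl]]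
    proof (elim disjE exE conjE)
      assume "diameter (q ` \<Gamma> k) \<le> ?d / \<rho>"
      then have "diameter (\<Gamma> (Suc k)) \<le> a * ?d" unfolding \<Gamma>S a_def by simp
      also have "\<dots> \<le> a * (2 ^ card (H k) * a ^ k * D)" using hk a1 by (intro mult_left_mono) auto
      also have "\<dots> = 2 ^ card (H k) * (a ^ Suc k * D)" by (simp add: algebra_simps)
      also have "\<dots> \<le> 2 ^ card (H (Suc k)) * (a ^ Suc k * D)"
        using a1 D0 by (intro pow2_mono card_mono finH Hmono) auto
      finally show ?thesis by (simp add: algebra_simps)
    next
      fix c assume c: "Ov \<inter> \<Gamma> k = {c}" and dd: "diameter (q ` \<Gamma> k) \<le> 2 * ?d / \<rho>"
      have cnot: "c \<notin> H k"
      proof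
        assume "c \<in> H k"
        then obtain j where j: "j < k" "c \<in> \<Gamma> j" "c \<in> Ov" unfolding H_def by blast
        have jj: "(k - j) + j = k" using j by simp
        have "(q ^^ (k - j)) c \<in> (q ^^ (k - j)) ` \<Gamma> j" using j by blast
        then have "(q ^^ (k - j)) c \<in> \<Gamma> k" unfolding sh jj .
        moreover have "c \<in> \<Gamma> k" using c by blast
        ultimately have "dist ((q ^^ (k - j)) c) c \<le> ?d" using diameter_bounded_bound[OF b\<Gamma>] by blast
        moreover have "\<eta> \<le> dist ((q ^^ (k - j)) c) c" using etaP j by auto
        moreover have "?d < \<eta>" using small(1)[OF order_refl] .
        ultimately show False by linarith
      qed
      have "insert c (H k) \<subseteq> H (Suc k)" using c Hmono unfolding H_def by auto
      then have cc: "card (H k) + 1 \<le> card (H (Suc k))"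
        using card_mono[OF finH] cnot finH by (metis Suc_eq_plus1 card_insert_disjoint)
      have "diameter (\<Gamma> (Suc k)) \<le> 2 * a * ?d" using dd unfolding \<Gamma>S a_def by simp
      also have "\<dots> \<le> 2 * a * (2 ^ card (H k) * a ^ k * D)" using hk a1 by (intro mult_left_mono) auto
      also have "\<dots> = 2 ^ (card (H k) + 1) * (a ^ Suc k * D)" by (simp add: algebra_simps)
      also have "\<dots> \<le> 2 ^ card (H (Suc k)) * (a ^ Suc k * D)"
        using a1 D0 cc by (intro pow2_mono) auto
      finally show ?thesis by (simp add: algebra_simps)
    qed
    then show ?case using IH le_Suc_eq by auto
  qed
  have "diameter (\<Gamma> n) \<le> 2 ^ card (H n) * a ^ n * D" using main[of n] by simp
  also have "\<dots> = 2 ^ card (H n) * (a ^ n * D)" by simp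
  also have "\<dots> \<le> 2 ^ card Ov * (a ^ n * D)" using pow2_mono[OF cardH] a1 D0 by simp
  finally show ?thesis unfolding \<Gamma>_def a_def D_def by (simp add: algebra_simps)
qed

end

theorem lemma3p5:
  fixes m :: nat and f :: "nat \<Rightarrow> complex \<Rightarrow> complex" and lam :: complex
    and A :: "complex set" and q :: "complex \<Rightarrow> complex"
  assumes "m \<ge> 2"
    and "0 < cmod lam" and "cmod lam < 1"
    and "similarity_IFS m (cmod lam) f"
    and "is_attractor m f A"
    and "connected A"
    and "inverse_map m f A q"
    and "finite (overlap_set m f A)" and "overlap_set m f A \<noteq> {}"
    and "critically_non_recurrent m f A q"
  shows "\<exists>C \<delta>1. C \<ge> 1 \<and> \<delta>1 > 0 \<and>
    (\<forall>L. bounded_turning A L \<longrightarrow>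
      (\<forall>B n x. B \<subseteq> A \<and> connected B \<and> diameter B < \<delta>1 \<and> x \<in> preimage_iter A q n B \<longrightarrow>
         C * cmod lam ^ n * diameter B \<ge> diameter (connected_component_set (preimage_iter A q n B) x)
         \<and> diameter (connected_component_set (preimage_iter A q n B) x)
             \<ge> inr A (connected_component_set (preimage_iter A q n B) x) x
         \<and> inr A (connected_component_set (preimage_iter A q n B) x) x
             \<ge> cmod lam ^ n * inr A B ((q ^^ n) x) / (C * L)))"
proof -
  let ?\<rho> = "cmod lam"
  interpret ifs m f "cmod lam" A q
    using assms by unfold_locales auto
  obtain s where s: "s > 0" and sep: "\<forall>c\<in>Ov. \<forall>c'\<in>Ov. c \<noteq> c' \<longrightarrow> s \<le> dist c c'"
    using separation by blast
  obtain \<eta> where \<eta>: "\<eta> > 0" and etaP: "\<forall>c\<in>Ov. \<forall>k\<ge>1. \<eta> \<le> dist ((q ^^ k) c) c"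
    using eta by blast
  define C :: real where "C = 2 ^ card Ov"
  define \<delta>1 where "\<delta>1 = min \<eta> (s / 2) / C"
  have C1: "C \<ge> 1" unfolding C_def by simp
  have \<delta>pos: "\<delta>1 > 0" unfolding \<delta>1_def using s \<eta> C1 by simp
  have C\<delta>: "C * \<delta>1 = min \<eta> (s / 2)" unfolding \<delta>1_def using C1 by simp
  have rho: "0 < ?\<rho>" "?\<rho> < 1" using assms by auto
  have main: "C * ?\<rho> ^ n * diameter B \<ge> diameter (connected_component_set (preimage_iter A q n B) x)
         \<and> diameter (connected_component_set (preimage_iter A q n B) x)
             \<ge> inr A (connected_component_set (preimage_iter A q n B) x) x
         \<and> inr A (connected_component_set (preimage_iter A q n B) x) x
             \<ge> ?\<rho> ^ n * inr A B ((q ^^ n) x) / (C * L)"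
    if BT: "bounded_turning A L" and hB: "B \<subseteq> A" "connected B" "diameter B < \<delta>1"
      and x: "x \<in> preimage_iter A q n B" for L B n x
  proof -
    define W where "W = connected_component_set (preimage_iter A q n B) x"
    define r where "r = inr A B ((q ^^ n) x)"
    have bB: "bounded B" using hB boundedA bounded_subset by blast
    have dB0: "0 \<le> diameter B" using diameter_ge_0[OF bB] .
    have CdB: "C * diameter B < min \<eta> (s / 2)"
    proof -
      have "C * diameter B < C * \<delta>1" using hB(3) C1 by (intro mult_strict_left_mono) auto
      then show ?thesis using C\<delta> by simp
    qed
    have WA: "W \<subseteq> A" unfolding W_def preimage_iter_def using connected_component_subset by blast
    have xW: "x \<in> W" unfolding W_def using x by simp
    have qnxB: "(q ^^ n) x \<in> B" using x unfolding preimage_iter_def by blast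
    have c1: "C * ?\<rho> ^ n * diameter B \<ge> diameter W"
      using upper[OF sep etaP hB(1) x] CdB unfolding W_def C_def by simp
    have c2: "diameter W \<ge> inr A W x"
      unfolding inr_def using inr_le_diam[OF WA xW] .
    have r0: "0 \<le> r" unfolding r_def inr_def by (rule infdist_nonneg)
    have rdB: "r \<le> diameter B" unfolding r_def inr_def using inr_le_diam[OF hB(1) qnxB] .
    have c3: "inr A W x \<ge> ?\<rho> ^ n * r / (C * L)"
    proof (cases "L \<le> 0")
      case True
      have "?\<rho> ^ n * r / (C * L) \<le> 0"
        using True C1 r0 rho by (intro divide_nonneg_nonpos) (auto simp: mult_nonneg_nonpos)
      also have "0 \<le> inr A W x" unfolding inr_def by (rule infdist_nonneg)
      finally show ?thesis .
    next
      case False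
      then have L0: "L > 0" by simp
      define t where "t = ?\<rho> ^ n * r / (C * L)"
      show ?thesis
      proof (cases "A - W = {}")
        case True
        have "A - B = {}"
        proof
          show "A - B \<subseteq> {}"
          proof
            fix a assume a: "a \<in> A - B"
            then obtain a' where a': "a' \<in> A" "a = (q ^^ n) a'" using A_sub_qnA by blast
            then have "a' \<in> W" using True by blast
            then have "(q ^^ n) a' \<in> B" using WA unfolding W_def preimage_iter_def
              using connected_component_subset by blast
            then show "a \<in> {}" using a a' by blast
          qed
        qed simp
        then have "r = 0" unfolding r_def inr_def by (simp add: infdist_def)
        then show ?thesis unfolding inr_def by (simp add: infdist_nonneg)
      next
        case False
        have "t \<le> infdist x (A - W)"
        proof (rule infdist_geI[OF False])
          fix z assume z: "z \<in> A - W"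
          show "t \<le> dist x z"
          proof (rule ccontr)
            assume "\<not> t \<le> dist x z"
            then have zt: "dist x z < t" by simp
            have xA: "x \<in> A" using xW WA by blast
            have zA: "z \<in> A" using z by blast
            obtain \<gamma> where \<gamma>: "path \<gamma>" "path_image \<gamma> \<subseteq> A" "pathstart \<gamma> = x" "pathfinish \<gamma> = z"
              "diameter (path_image \<gamma>) \<le> L * dist x z"
              using bspec[OF bspec[OF BT[unfolded bounded_turning_def] xA] zA] by blast
            have G0A: "path_image \<gamma> \<subseteq> A" by (rule \<gamma>(2))
            define \<Gamma>0 where "\<Gamma>0 = path_image \<gamma>"
            have cpt: "compact \<Gamma>0" unfolding \<Gamma>0_def using compact_path_image[OF \<gamma>(1)] .
            have con: "connected \<Gamma>0" unfolding \<Gamma>0_def using connected_path_image[OF \<gamma>(1)] .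
            have x0: "x \<in> \<Gamma>0" "z \<in> \<Gamma>0" unfolding \<Gamma>0_def
              using pathstart_in_path_image[of \<gamma>] pathfinish_in_path_image[of \<gamma>] \<gamma>(3,4) by simp_all
            have D0: "0 \<le> diameter \<Gamma>0" using diameter_ge_0[OF compact_imp_bounded[OF cpt]] .
            have "L * dist x z < L * t" using mult_strict_left_mono[OF zt L0] .
            then have "diameter \<Gamma>0 < L * t" using \<gamma>(5) unfolding \<Gamma>0_def by linarith
            also have "L * t = ?\<rho> ^ n * r / C" unfolding t_def using L0 by simp
            finally have dG: "diameter \<Gamma>0 < ?\<rho> ^ n * r / C" .
            have "(1 / ?\<rho>) ^ n * diameter \<Gamma>0 < (1 / ?\<rho>) ^ n * (?\<rho> ^ n * r / C)"
              using dG rho by (intro mult_strict_left_mono) auto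
            also have "\<dots> = r / C" using rho by (simp add: power_one_over)
            finally have "C * ((1 / ?\<rho>) ^ n * diameter \<Gamma>0) < C * (r / C)"
              using C1 by (intro mult_strict_left_mono) auto
            then have key: "C * (1 / ?\<rho>) ^ n * diameter \<Gamma>0 < r" using C1 by (simp add: mult.assoc)
            have "r < min \<eta> (s / 2)"
            proof -
              have "1 * diameter B \<le> C * diameter B" using C1 dB0 by (rule mult_right_mono)
              then have "r \<le> C * diameter B" using rdB by simp
              then show ?thesis using CdB by linarith
            qed
            then have sm1: "2 ^ card Ov * (1 / ?\<rho>) ^ n * diameter \<Gamma>0 < \<eta>"
              and sm2: "2 ^ card Ov * (1 / ?\<rho>) ^ n * diameter \<Gamma>0 < s"
              using key s unfolding C_def by auto
            have G0A': "\<Gamma>0 \<subseteq> A" unfolding \<Gamma>0_def by (rule G0A)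
            have "diameter ((q ^^ n) ` \<Gamma>0) \<le> 2 ^ card Ov * (1 / ?\<rho>) ^ n * diameter \<Gamma>0"
              by (rule lower[OF sep etaP G0A' con cpt sm1 sm2])
            then have low: "diameter ((q ^^ n) ` \<Gamma>0) < r" using key unfolding C_def by linarith
            have cptn: "compact ((q ^^ n) ` \<Gamma>0)"
              by (rule compact_continuous_image[OF continuous_on_subset[OF qn_cont G0A'] cpt])
            have sub: "\<Gamma>0 \<subseteq> preimage_iter A q n B"
            proof
              fix y assume y: "y \<in> \<Gamma>0"
              then have yA: "y \<in> A" using G0A' by blast
              have "dist ((q ^^ n) x) ((q ^^ n) y) \<le> diameter ((q ^^ n) ` \<Gamma>0)"
                using diameter_bounded_bound[OF compact_imp_bounded[OF cptn]] y x0 by blast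
              then have dl: "dist ((q ^^ n) x) ((q ^^ n) y) < r" using low by linarith
              have "(q ^^ n) y \<in> B"
              proof (rule ccontr)
                assume "(q ^^ n) y \<notin> B"
                moreover have "(q ^^ n) y \<in> A" using yA qn_A by blast
                ultimately have "r \<le> dist ((q ^^ n) x) ((q ^^ n) y)"
                  unfolding r_def inr_def by (intro infdist_le) auto
                then show False using dl by linarith
              qed
              then show "y \<in> preimage_iter A q n B" using yA unfolding preimage_iter_def by blast
            qed
            have "\<Gamma>0 \<subseteq> W" unfolding W_def by (rule connected_component_maximal[OF x0(1) con sub])
            then show False using x0(2) z by blast
          qed
        qed
        then show ?thesis unfolding inr_def t_def .
      qed
    qed
    show ?thesis using c1 c2 c3 unfolding W_def r_def by blast
  qed
  show ?thesis
  proof (rule exI[of _ C], rule exI[of _ \<delta>1], intro conjI allI impI)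
    show "1 \<le> C" by (rule C1)
    show "0 < \<delta>1" by (rule \<delta>pos)
    fix L B n x assume BT: "bounded_turning A L"
      and h: "B \<subseteq> A \<and> connected B \<and> diameter B < \<delta>1 \<and> x \<in> preimage_iter A q n B"
    note mm = main[OF BT conjunct1[OF h] conjunct1[OF conjunct2[OF h]] conjunct1[OF conjunct2[OF conjunct2[OF h]]] conjunct2[OF conjunct2[OF conjunct2[OF h]]]]
    show "diameter (connected_component_set (preimage_iter A q n B) x) \<le> C * cmod lam ^ n * diameter B" using mm by (rule conjunct1)
    show "inr A (connected_component_set (preimage_iter A q n B) x) x \<le> diameter (connected_component_set (preimage_iter A q n B) x)" using mm by blast
    show "cmod lam ^ n * inr A B ((q ^^ n) x) / (C * L) \<le> inr A (connected_component_set (preimage_iter A q n B) x) x" using mm by blast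
  qed
qed

end
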